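(* Let $H_1$ and $H_2$ be groups, where $H_2$ does not have exponential growth. Let $G\leqslant H_1\times H_2$ be finitely generated, such that the restriction to $G$ of the projection $H_1\times H_2\to H_1$ is infinite-to-1. Then for any constants $\alpha,\beta>0$ there exists a finite generating set $U$ of $G$ such that $|U^n|<(\alpha|U|)^{\beta n}$ for some $n\in\mathbb{N}$.
   Context: For a finitely generated group $G$ with finite generating set $S$, let $B_S(n)$ be the ball of radius $n$ about the identity in the word metric of $S$, and $\omega(G,S)=\lim_{n\to\infty}|B_S(n)|^{1/n}$; $G$ has exponential growth if $\omega(G,S)>1$ (for some, equivalently every, finite generating set $S$). A group not assumed finitely generated is said not to have exponential growth if none of its finitely generated subgroups has exponential growth. $U^n=\{u_1\cdots u_n:u_i\in U\}$. A homomorphism is infinite-to-1 if its kernel is infinite. *)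

theory Defs
  imports "HOL-Analysis.Analysis" "HOL-Algebra.Algebra"
begin

definition list_prod :: "('a, 'b) monoid_scheme \<Rightarrow> 'a list \<Rightarrow> 'a" where
  "list_prod G xs = foldr (\<lambda>x y. x \<otimes>\<^bsub>G\<^esub> y) xs \<one>\<^bsub>G\<^esub>"

definition word_ball :: "('a, 'b) monoid_scheme \<Rightarrow> 'a set \<Rightarrow> nat \<Rightarrow> 'a set" where
  "word_ball G S n = {list_prod G xs | xs. length xs \<le> n \<and> set xs \<subseteq> S \<union> (\<lambda>s. inv\<^bsub>G\<^esub> s) ` S}"

definition growth_rate :: "('a, 'b) monoid_scheme \<Rightarrow> 'a set \<Rightarrow> real" where
  "growth_rate G S = lim (\<lambda>n. real (card (word_ball G S n)) powr (1 / real n))"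

definition exp_growth_wrt :: "('a, 'b) monoid_scheme \<Rightarrow> 'a set \<Rightarrow> bool" where
  "exp_growth_wrt G S \<longleftrightarrow> growth_rate G S > 1"

definition no_exp_growth :: "('a, 'b) monoid_scheme \<Rightarrow> bool" where
  "no_exp_growth G \<longleftrightarrow> (\<forall>S. finite S \<and> S \<subseteq> carrier G \<longrightarrow> \<not> exp_growth_wrt G S)"

definition set_pow :: "('a, 'b) monoid_scheme \<Rightarrow> 'a set \<Rightarrow> nat \<Rightarrow> 'a set" where
  "set_pow G U n = {list_prod G xs | xs. length xs = n \<and> set xs \<subseteq> U}"

end

theory Submission
  imports Defs
begin

lemma subadd_bound:
  fixes a :: "nat \<Rightarrow> real"
  assumes sub: "\<And>m n. a (m + n) \<le> a m + a n"
  shows "a (q * k + r) \<le> real q * a k + a r"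
proof (induction q)
  case 0 then show ?case by simp
next
  case (Suc q)
  have "a (Suc q * k + r) = a (k + (q * k + r))" by (simp add: algebra_simps)
  also have "\<dots> \<le> a k + a (q*k+r)" by (rule sub)
  also have "\<dots> \<le> real (Suc q) * a k + a r" using Suc by (simp add: algebra_simps)
  finally show ?case .
qed

lemma fekete:
  fixes a :: "nat \<Rightarrow> real"
  assumes nn: "\<And>n. a n \<ge> 0" and sub: "\<And>m n. a (m + n) \<le> a m + a n"
  shows "(\<lambda>n. a n / real n) \<longlonglongrightarrow> Inf ((\<lambda>n. a n / real n) ` {1..})"
proof (rule LIMSEQ_I)
  let ?L = "Inf ((\<lambda>n. a n / real n) ` {1..})"
  fix e :: real assume e: "e > 0"
  have bdd: "bdd_below ((\<lambda>n. a n / real n) ` {1..})"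
    by (rule bdd_belowI[of _ 0]) (auto intro!: divide_nonneg_nonneg nn)
  have low: "?L \<le> a n / real n" if "n \<ge> 1" for n
    using that bdd by (intro cInf_lower) auto
  have "\<exists>x\<in>(\<lambda>n. a n / real n) ` {1..}. x < ?L + e/2"
    using bdd e by (subst cInf_less_iff[symmetric]) auto
  then obtain k where k: "k \<ge> 1" "a k / real k < ?L + e/2" by auto
  define C where "C = Max (a ` {..<k})"
  have C: "a r \<le> C" if "r < k" for r unfolding C_def using that by (intro Max_ge) auto
  have C0: "C \<ge> 0" using C[of 0] nn[of 0] k by linarith
  obtain N :: nat where N: "N > 2 * C / e" using reals_Archimedean2 by blast
  show "\<exists>no. \<forall>n\<ge>no. norm (a n / real n - ?L) < e"
  proof (intro exI[of _ "Suc N"] allI impI)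
    fix n assume n: "n \<ge> Suc N"
    hence n1: "n \<ge> 1" and npos: "real n > 0" by auto
    have dec: "n = (n div k) * k + n mod k" by simp
    have "a n \<le> real (n div k) * a k + a (n mod k)"
      using subadd_bound[OF sub, of "n div k" k "n mod k"] dec by simp
    also have "\<dots> \<le> real n / real k * a k + C"
    proof (intro add_mono mult_right_mono C)
      have "real (n div k) * real k \<le> real n"
        by (metis of_nat_le_iff of_nat_mult div_times_less_eq_dividend)
      then show "real (n div k) \<le> real n / real k" using k by (simp add: field_simps)
    qed (use nn k in auto)
    finally have "a n / real n \<le> (real n / real k * a k + C) / real n"
      using npos by (simp add: divide_right_mono)
    also have "\<dots> = a k / real k + C / real n" using npos k by (simp add: field_simps)
    also have "C / real n < e / 2"
    proof -
      have "2 * C / e < real n" using N n by linarith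
      then show ?thesis using e npos by (simp add: field_simps)
    qed
    finally have "a n / real n < ?L + e" using k by linarith
    moreover have "?L \<le> a n / real n" using low n1 .
    ultimately show "norm (a n / real n - ?L) < e" by simp
  qed
qed


lemma list_prod_closed:
  assumes "monoid G" "set xs \<subseteq> carrier G"
  shows "list_prod G xs \<in> carrier G"
  using assms(2) by (induction xs) (auto simp: list_prod_def monoid.m_closed[OF assms(1)] monoid.one_closed[OF assms(1)])

lemma list_prod_append:
  assumes "monoid G" "set xs \<subseteq> carrier G" "set ys \<subseteq> carrier G"
  shows "list_prod G (xs @ ys) = list_prod G xs \<otimes>\<^bsub>G\<^esub> list_prod G ys"
  using assms(2)
proof (induction xs)
  case Nil
  then show ?case using list_prod_closed[OF assms(1,3)] assms(1)
    by (simp add: list_prod_def monoid.l_one)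
next
  case (Cons x xs)
  then have "list_prod G ((x # xs) @ ys) = x \<otimes>\<^bsub>G\<^esub> (list_prod G xs \<otimes>\<^bsub>G\<^esub> list_prod G ys)"
    by (simp add: list_prod_def)
  also have "\<dots> = list_prod G (x # xs) \<otimes>\<^bsub>G\<^esub> list_prod G ys"
    using Cons.prems list_prod_closed[OF assms(1)] assms
    by (simp add: list_prod_def monoid.m_assoc[OF assms(1)])
  finally show ?case .
qed

lemma list_prod_DirProd:
  "list_prod (G \<times>\<times> H) xs = (list_prod G (map fst xs), list_prod H (map snd xs))"
  by (induction xs) (auto simp: list_prod_def mult_DirProd')

lemma set_pow_sub: "set_pow G A n \<subseteq> list_prod G ` {xs. set xs \<subseteq> A \<and> length xs = n}"
  unfolding set_pow_def by auto

lemma set_pow_finite: "finite A \<Longrightarrow> finite (set_pow G A n)"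
  by (rule finite_subset[OF set_pow_sub]) (auto intro: finite_lists_length_eq)

lemma set_pow_card: "finite A \<Longrightarrow> card (set_pow G A n) \<le> card A ^ n"
proof -
  assume A: "finite A"
  have "card (set_pow G A n) \<le> card (list_prod G ` {xs. set xs \<subseteq> A \<and> length xs = n})"
    by (rule card_mono[OF _ set_pow_sub]) (auto intro: finite_lists_length_eq A)
  also have "\<dots> \<le> card {xs. set xs \<subseteq> A \<and> length xs = n}" by (rule card_image_le) (auto intro: finite_lists_length_eq A)
  also have "\<dots> = card A ^ n" using A by (rule card_lists_length_eq)
  finally show ?thesis .
qed

lemma word_ball_finite:
  assumes "finite T" shows "finite (word_ball G T n)"
proof -
  have "word_ball G T n \<subseteq> list_prod G ` {xs. set xs \<subseteq> T \<union> (\<lambda>s. inv\<^bsub>G\<^esub> s) ` T \<and> length xs \<le> n}"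
    unfolding word_ball_def by auto
  then show ?thesis by (rule finite_subset) (auto intro: finite_lists_length_le assms)
qed

lemma word_ball_one: "\<one>\<^bsub>G\<^esub> \<in> word_ball G T n"
  unfolding word_ball_def by (auto intro!: exI[of _ "[]"] simp: list_prod_def)

lemma word_ball_card_pos: "finite T \<Longrightarrow> card (word_ball G T n) \<ge> 1"
  using word_ball_one[of G T n] word_ball_finite[of T G n]
  by (metis One_nat_def Suc_leI card_gt_0_iff empty_iff)

lemma word_ball_mult:
  assumes G: "group G" and T: "T \<subseteq> carrier G"
  shows "word_ball G T (m + n) \<subseteq> (\<lambda>(x, y). x \<otimes>\<^bsub>G\<^esub> y) ` (word_ball G T m \<times> word_ball G T n)"
proof
  fix z assume "z \<in> word_ball G T (m + n)"
  then obtain xs where z: "z = list_prod G xs" and l: "length xs \<le> m + n"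
    and s: "set xs \<subseteq> T \<union> (\<lambda>s. inv\<^bsub>G\<^esub> s) ` T" unfolding word_ball_def by auto
  have car: "T \<union> (\<lambda>s. inv\<^bsub>G\<^esub> s) ` T \<subseteq> carrier G" using T group.inv_closed[OF G] by auto
  have mon: "monoid G" using G by (simp add: group.is_monoid)
  have st: "set (take m xs) \<subseteq> T \<union> (\<lambda>s. inv\<^bsub>G\<^esub> s) ` T" using s by (meson order_trans set_take_subset)
  have sd: "set (drop m xs) \<subseteq> T \<union> (\<lambda>s. inv\<^bsub>G\<^esub> s) ` T" using s by (meson order_trans set_drop_subset)
  have "z = list_prod G (take m xs) \<otimes>\<^bsub>G\<^esub> list_prod G (drop m xs)"
  proof -
    have "set (take m xs) \<subseteq> carrier G" "set (drop m xs) \<subseteq> carrier G" using order_trans[OF st car] order_trans[OF sd car] by auto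
    then show ?thesis using list_prod_append[OF mon, of "take m xs" "drop m xs"] z by simp
  qed
  moreover have "list_prod G (take m xs) \<in> word_ball G T m" using st unfolding word_ball_def by auto
  moreover have "list_prod G (drop m xs) \<in> word_ball G T n" using sd l unfolding word_ball_def by auto
  ultimately show "z \<in> (\<lambda>(x, y). x \<otimes>\<^bsub>G\<^esub> y) ` (word_ball G T m \<times> word_ball G T n)" by force
qed

lemma word_ball_card_mult:
  assumes G: "group G" and T: "T \<subseteq> carrier G" "finite T"
  shows "card (word_ball G T (m + n)) \<le> card (word_ball G T m) * card (word_ball G T n)"
proof -
  have "card (word_ball G T (m + n)) \<le> card ((\<lambda>(x, y). x \<otimes>\<^bsub>G\<^esub> y) ` (word_ball G T m \<times> word_ball G T n))"
    by (rule card_mono[OF _ word_ball_mult[OF G T(1)]]) (auto intro: word_ball_finite T(2))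
  also have "\<dots> \<le> card (word_ball G T m \<times> word_ball G T n)"
    by (rule card_image_le) (auto intro: word_ball_finite T(2))
  finally show ?thesis by (simp add: card_cartesian_product)
qed

lemma growth_small:
  assumes G: "group G" and T: "T \<subseteq> carrier G" "finite T" and ng: "\<not> exp_growth_wrt G T"
  shows "\<exists>N. \<forall>n\<ge>N. real (card (word_ball G T n)) < 2 ^ n"
proof -
  define b where "b n = real (card (word_ball G T n))" for n
  define a where "a n = ln (b n)" for n
  have b1: "b n \<ge> 1" for n unfolding b_def using word_ball_card_pos[OF T(2)] by simp
  have a0: "a n \<ge> 0" for n unfolding a_def using b1 by simp
  have asub: "a (m + n) \<le> a m + a n" for m n
  proof -
    have "b (m + n) \<le> b m * b n" unfolding b_def using word_ball_card_mult[OF G T]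
      by (metis of_nat_le_iff of_nat_mult)
    then have "ln (b (m + n)) \<le> ln (b m * b n)" using b1
      by (metis ln_le_cancel_iff less_le_trans zero_less_one)
    moreover have "ln (b m * b n) = ln (b m) + ln (b n)" using b1[of m] b1[of n] by (intro ln_mult_pos) auto
    ultimately show ?thesis unfolding a_def by simp
  qed
  define L where "L = Inf ((\<lambda>n. a n / real n) ` {1..})"
  have lim1: "(\<lambda>n. a n / real n) \<longlonglongrightarrow> L" unfolding L_def by (rule fekete[OF a0 asub])
  have lim2: "(\<lambda>n. exp (a n / real n)) \<longlonglongrightarrow> exp L" by (rule tendsto_exp[OF lim1])
  have ev: "eventually (\<lambda>n. exp (a n / real n) = b n powr (1 / real n)) sequentially"
  proof (rule always_eventually, rule allI)
    fix n have "b n \<noteq> 0" using b1[of n] by auto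
    then show "exp (a n / real n) = b n powr (1 / real n)" unfolding a_def by (simp add: powr_def)
  qed
  have lim3: "(\<lambda>n. b n powr (1 / real n)) \<longlonglongrightarrow> exp L"
    using tendsto_cong[OF ev] lim2 by simp
  have "growth_rate G T = exp L" unfolding growth_rate_def b_def[symmetric]
    using lim3 by (rule limI)
  with ng have "exp L \<le> 1" unfolding exp_growth_wrt_def by simp
  then have "eventually (\<lambda>n. b n powr (1 / real n) < 2) sequentially"
    using order_tendstoD(2)[OF lim3, of 2] \<open>exp L \<le> 1\<close> by linarith
  then obtain N where N: "\<And>n. n \<ge> N \<Longrightarrow> b n powr (1 / real n) < 2"
    unfolding eventually_sequentially by blast
  show ?thesis
  proof (intro exI[of _ "Suc N"] allI impI)
    fix n assume n: "n \<ge> Suc N"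
    have "b n = (b n powr (1 / real n)) powr real n" using b1[of n] n by (simp add: powr_powr)
    also have "\<dots> < 2 powr real n" using N[of n] n b1
      by (intro powr_less_mono2) auto
    also have "\<dots> = 2 ^ n" by (simp add: powr_realpow)
    finally show "real (card (word_ball G T n)) < 2 ^ n" unfolding b_def .
  qed
qed


theorem proposition2p18:
  fixes H1 :: "('a, 'c) monoid_scheme" and H2 :: "('b, 'd) monoid_scheme"
    and G :: "('a \<times> 'b) set"
  assumes "group H1" and "group H2"
    and "no_exp_growth H2"
    and "subgroup G (H1 \<times>\<times> H2)"
    and "\<exists>S. finite S \<and> S \<subseteq> G \<and> generate (H1 \<times>\<times> H2) S = G"
    and "infinite {g \<in> G. fst g = \<one>\<^bsub>H1\<^esub>}"
  shows "\<forall>\<alpha> \<beta> :: real. \<alpha> > 0 \<and> \<beta> > 0 \<longrightarrow>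
           (\<exists>U. finite U \<and> U \<subseteq> G \<and> generate (H1 \<times>\<times> H2) U = G \<and>
              (\<exists>n::nat. real (card (set_pow (H1 \<times>\<times> H2) U n))
                        < (\<alpha> * real (card U)) powr (\<beta> * real n)))"
proof (intro allI impI)
  fix \<alpha> \<beta> :: real assume ab: "\<alpha> > 0 \<and> \<beta> > 0"
  let ?P = "H1 \<times>\<times> H2"
  have gP: "group ?P" using assms(1,2) by (rule DirProd_group)
  obtain S where S: "finite S" "S \<subseteq> G" "generate ?P S = G" using assms(5) by blast
  define K where "K = {g \<in> G. fst g = \<one>\<^bsub>H1\<^esub>}"
  define s where "s = card S"
  define c where "c = (2 * (real s + 1)) powr (1 / \<beta>) / \<alpha>"
  define m where "m = nat \<lceil>c\<rceil>"
  have "infinite (K - S)" using assms(6) S(1) unfolding K_def by auto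
  then obtain F where F: "finite F" "card F = m" "F \<subseteq> K - S"
    using infinite_arbitrarily_large by blast
  define U where "U = S \<union> F"
  have Ufin: "finite U" unfolding U_def using S F by auto
  have UG: "U \<subseteq> G" unfolding U_def using S F unfolding K_def by auto
  have cardU: "card U = s + m" unfolding U_def s_def using S F
    by (subst card_Un_disjoint) auto
  have genU: "generate ?P U = G"
  proof
    show "generate ?P U \<subseteq> G" using group.generate_subgroup_incl[OF gP UG assms(4)] .
    show "G \<subseteq> generate ?P U" using group.mono_generate[OF gP, of S U] S(3) unfolding U_def by auto
  qed
  define T where "T = snd ` U"
  define A where "A = fst ` U"
  have Gc: "G \<subseteq> carrier ?P" using assms(4) by (rule subgroup.subset)
  have Tc: "T \<subseteq> carrier H2" unfolding T_def using UG Gc by auto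
  have Tfin: "finite T" unfolding T_def using Ufin by auto
  have ng: "\<not> exp_growth_wrt H2 T" using assms(3) Tc Tfin unfolding no_exp_growth_def by blast
  obtain N where N: "\<And>n. n \<ge> N \<Longrightarrow> real (card (word_ball H2 T n)) < 2 ^ n"
    using growth_small[OF assms(2) Tc Tfin ng] by blast
  have Afin: "finite A" unfolding A_def using Ufin by auto
  have "A \<subseteq> fst ` S \<union> {\<one>\<^bsub>H1\<^esub>}" unfolding A_def U_def using F(3) unfolding K_def by auto
  hence "card A \<le> card (fst ` S \<union> {\<one>\<^bsub>H1\<^esub>})" using S(1) by (intro card_mono) auto
  also have "\<dots> \<le> card (fst ` S) + 1" using card_Un_le[of "fst ` S" "{\<one>\<^bsub>H1\<^esub>}"] by simp
  also have "\<dots> \<le> s + 1" unfolding s_def using card_image_le[OF S(1)] by simp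
  finally have cardA: "card A \<le> s + 1" .
  have sub: "set_pow ?P U N \<subseteq> set_pow H1 A N \<times> word_ball H2 T N"
  proof
    fix z assume "z \<in> set_pow ?P U N"
    then obtain xs where z: "z = list_prod ?P xs" "length xs = N" "set xs \<subseteq> U"
      unfolding set_pow_def by auto
    have "list_prod H1 (map fst xs) \<in> set_pow H1 A N"
      unfolding set_pow_def A_def using z by (intro CollectI exI[of _ "map fst xs"]) auto
    moreover have "list_prod H2 (map snd xs) \<in> word_ball H2 T N"
      unfolding word_ball_def T_def using z by (intro CollectI exI[of _ "map snd xs"]) auto
    ultimately show "z \<in> set_pow H1 A N \<times> word_ball H2 T N" using z by (simp add: list_prod_DirProd)
  qed
  have "card (set_pow ?P U N) \<le> card (set_pow H1 A N \<times> word_ball H2 T N)"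
    by (rule card_mono[OF _ sub]) (auto intro: set_pow_finite word_ball_finite Afin Tfin)
  also have "\<dots> = card (set_pow H1 A N) * card (word_ball H2 T N)" by (rule card_cartesian_product)
  also have "\<dots> \<le> (s + 1) ^ N * card (word_ball H2 T N)"
    using set_pow_card[OF Afin, of H1 N] cardA by (intro mult_right_mono) (auto intro: order_trans power_mono)
  finally have "real (card (set_pow ?P U N)) \<le> real ((s + 1) ^ N * card (word_ball H2 T N))"
    by (rule of_nat_mono)
  also have "\<dots> = (real s + 1) ^ N * real (card (word_ball H2 T N))" by (simp add: add.commute)
  also have "\<dots> < (real s + 1) ^ N * 2 ^ N" using N[of N] by simp
  also have "\<dots> = (2 * (real s + 1)) ^ N" by (simp only: power_mult_distrib mult.commute)
  also have "\<dots> \<le> ((\<alpha> * real (card U)) powr \<beta>) ^ N"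
  proof (rule power_mono)
    have c0: "c > 0" unfolding c_def using ab by simp
    have "c \<le> real m" unfolding m_def by linarith
    also have "\<dots> \<le> real (card U)" using cardU by simp
    finally have "\<alpha> * c \<le> \<alpha> * real (card U)" using ab by simp
    moreover have "\<alpha> * c = (2 * (real s + 1)) powr (1 / \<beta>)" unfolding c_def using ab by simp
    ultimately have "((2 * (real s + 1)) powr (1 / \<beta>)) powr \<beta> \<le> (\<alpha> * real (card U)) powr \<beta>"
      using ab by (intro powr_mono2) auto
    moreover have "((2 * (real s + 1)) powr (1 / \<beta>)) powr \<beta> = 2 * (real s + 1)"
      using ab by (simp add: powr_powr)
    ultimately show "2 * (real s + 1) \<le> (\<alpha> * real (card U)) powr \<beta>" by simp
  qed simp
  also have "\<dots> = (\<alpha> * real (card U)) powr (\<beta> * real N)"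
  proof -
    have c0: "c > 0" unfolding c_def using ab by simp
    have "c \<le> real m" unfolding m_def by linarith
    also have "\<dots> \<le> real (card U)" using cardU by simp
    finally have "\<alpha> * real (card U) > 0" using c0 ab by simp
    then have "(\<alpha> * real (card U)) powr \<beta> > 0" by (simp only: powr_gt_zero)
    then have "((\<alpha> * real (card U)) powr \<beta>) ^ N = ((\<alpha> * real (card U)) powr \<beta>) powr real N"
      by (simp add: powr_realpow)
    then show ?thesis by (simp add: powr_powr)
  qed
  finally show "\<exists>U. finite U \<and> U \<subseteq> G \<and> generate ?P U = G \<and>
              (\<exists>n::nat. real (card (set_pow ?P U n)) < (\<alpha> * real (card U)) powr (\<beta> * real n))"
    using Ufin UG genU by blast
qed

end
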